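(* Assume the vector variational inequality defined by $F$ and $K$ is monotone and $K$ is polyhedral convex (an intersection of finitely many closed half-spaces of $\mathbb{R}^n$). (a) If the Pareto solution set $\mathrm{Sol}(F,K)$ is disconnected, then each connected component of $\mathrm{Sol}(F,K)$ is unbounded. (b) If $\mathrm{Sol}(F,K)$ is bounded and nonempty, then it is connected.
   Context: Let $K\subset\mathbb{R}^n$ be a nonempty closed convex set and $F_1,\dots,F_m:K\to\mathbb{R}^n$ continuous functions; write $F=(F_1,\dots,F_m)$ and $F(x)(u)=(\langle F_1(x),u\rangle,\dots,\langle F_m(x),u\rangle)$. The problem is monotone if each $F_l$ is monotone on $K$: $\langle F_l(y)-F_l(x),y-x\rangle\ge0$ for all $x,y\in K$. The Pareto solution set $\mathrm{Sol}(F,K)$ is the set of $x\in K$ such that $F(x)(x-y)\notin\mathbb{R}^m_+\setminus\{0\}$ for all $y\in K$. *)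

theory Defs
  imports "HOL-Analysis.Analysis"
begin

definition monotone_map_on :: "'a::real_inner set \<Rightarrow> ('a \<Rightarrow> 'a) \<Rightarrow> bool" where
  "monotone_map_on K G \<longleftrightarrow> (\<forall>x\<in>K. \<forall>y\<in>K. (G y - G x) \<bullet> (y - x) \<ge> 0)"

text \<open>The components are indexed by the finite type 'm (so m = CARD('m) >= 1).
  F(x)(x-y) lies in R^m_+ minus {0} iff all components are >= 0 and some is > 0.\<close>
definition pareto_sol :: "('m::finite \<Rightarrow> 'a::real_inner \<Rightarrow> 'a) \<Rightarrow> 'a set \<Rightarrow> 'a set" where
  "pareto_sol F K = {x \<in> K. \<forall>y\<in>K.
      \<not> ((\<forall>l. F l x \<bullet> (x - y) \<ge> 0) \<and> (\<exists>l. F l x \<bullet> (x - y) > 0))}"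

end

theory Submission
  imports Defs
begin

definition vi :: "'a::real_inner set \<Rightarrow> ('a \<Rightarrow> 'a) \<Rightarrow> 'a set" where
  "vi K G = {x\<in>K. \<forall>y\<in>K. G x \<bullet> (y - x) \<ge> 0}"

lemma minty1:
  assumes "monotone_map_on K G" "x \<in> vi K G" "y \<in> K"
  shows "G y \<bullet> (y - x) \<ge> 0"
proof -
  have "x \<in> K" "G x \<bullet> (y - x) \<ge> 0" using assms(2,3) by (auto simp: vi_def)
  moreover have "(G y - G x) \<bullet> (y - x) \<ge> 0" using assms(1,3) \<open>x\<in>K\<close> by (auto simp: monotone_map_on_def)
  ultimately show ?thesis by (simp add: inner_diff_left)
qed

lemma minty2:
  fixes G :: "'a::real_inner \<Rightarrow> 'a"
  assumes "convex K" "continuous_on K G" "x \<in> K" "\<forall>y\<in>K. G y \<bullet> (y - x) \<ge> 0"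
  shows "x \<in> vi K G"
proof -
  have "G x \<bullet> (y - x) \<ge> 0" if y: "y \<in> K" for y
  proof -
    define z where "z = (\<lambda>n. x + (1 / real (Suc n)) *\<^sub>R (y - x))"
    have zK: "z n \<in> K" for n
    proof -
      have "z n = (1 - 1 / real (Suc n)) *\<^sub>R x + (1 / real (Suc n)) *\<^sub>R y"
        by (simp add: z_def algebra_simps)
      then show ?thesis using assms(1) assms(3) y
        by (simp add: convex_def divide_le_eq)
    qed
    have z: "z \<longlonglongrightarrow> x"
    proof -
      have "(\<lambda>n. x + (1 / real (Suc n)) *\<^sub>R (y - x)) \<longlonglongrightarrow> x + 0 *\<^sub>R (y - x)"
        by (intro tendsto_intros LIMSEQ_Suc[OF lim_inverse_n'[unfolded inverse_eq_divide]])
      then show ?thesis by (simp add: z_def)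
    qed
    have Gz: "(\<lambda>n. G (z n)) \<longlonglongrightarrow> G x"
      using continuous_on_sequentially[THEN iffD1, OF assms(2)] zK z assms(3)
      by (auto simp: o_def)
    have nn: "G (z n) \<bullet> (y - x) \<ge> 0" for n
    proof -
      have "G (z n) \<bullet> (z n - x) \<ge> 0" using assms(4) zK by auto
      then have "(1 / real (Suc n)) * (G (z n) \<bullet> (y - x)) \<ge> 0"
        by (simp add: z_def)
      then show ?thesis by (simp add: zero_le_divide_iff)
    qed
    have "(\<lambda>n. G (z n) \<bullet> (y - x)) \<longlonglongrightarrow> G x \<bullet> (y - x)"
      by (intro tendsto_intros Gz)
    then show ?thesis using nn by (meson LIMSEQ_le_const)
  qed
  then show ?thesis using assms(3) by (auto simp: vi_def)
qed

lemma vi_convex: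
  fixes G :: "'a::real_inner \<Rightarrow> 'a"
  assumes "convex K" "continuous_on K G" "monotone_map_on K G"
  shows "convex (vi K G)"
  unfolding convex_def
proof (intro ballI allI impI)
  fix u v and a b :: real
  assume uv: "u \<in> vi K G" "v \<in> vi K G" and ab: "0 \<le> a" "0 \<le> b" "a + b = 1"
  have "u \<in> K" "v \<in> K" using uv by (auto simp: vi_def)
  then have wK: "a *\<^sub>R u + b *\<^sub>R v \<in> K" using assms(1) ab by (auto simp: convex_def)
  show "a *\<^sub>R u + b *\<^sub>R v \<in> vi K G"
  proof (rule minty2[OF assms(1,2) wK], intro ballI)
    fix y assume y: "y \<in> K"
    have 1: "G y \<bullet> (y - u) \<ge> 0" "G y \<bullet> (y - v) \<ge> 0" using minty1[OF assms(3)] uv y by auto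
    have "y - (a *\<^sub>R u + b *\<^sub>R v) = a *\<^sub>R (y - u) + b *\<^sub>R (y - v)"
      using ab by (simp add: algebra_simps flip: scaleR_add_left)
    then show "G y \<bullet> (y - (a *\<^sub>R u + b *\<^sub>R v)) \<ge> 0"
      using 1 ab by (simp add: inner_add_right)
  qed
qed

lemma seg_norm:
  fixes u w :: "'a::real_normed_vector"
  assumes "norm u \<le> c" "c \<le> norm w"
  shows "\<exists>s. 0 \<le> s \<and> s \<le> 1 \<and> norm ((1 - s) *\<^sub>R u + s *\<^sub>R w) = c"
proof -
  have "\<exists>s. 0 \<le> s \<and> s \<le> 1 \<and> (\<lambda>s. norm ((1 - s) *\<^sub>R u + s *\<^sub>R w)) s = c"
    by (rule IVT') (use assms in \<open>auto intro!: continuous_intros\<close>)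
  then show ?thesis by simp
qed

lemma hartman_stampacchia:
  fixes G :: "'a::euclidean_space \<Rightarrow> 'a"
  assumes "compact D" "convex D" "D \<noteq> {}" "continuous_on D G"
  shows "vi D G \<noteq> {}"
proof -
  have cl: "closed D" using assms(1) by (simp add: compact_imp_closed)
  define f where "f = (\<lambda>x. closest_point D (x - G x))"
  have "continuous_on D f"
    unfolding f_def
    by (intro continuous_on_compose2[OF continuous_on_closest_point[OF assms(2) cl assms(3)]]
        continuous_intros assms(4)) auto
  moreover have "f \<in> D \<rightarrow> D" using closest_point_in_set[OF cl assms(3)] by (auto simp: f_def)
  ultimately obtain x where x: "x \<in> D" "f x = x" using brouwer[OF assms(1-3)] by blast
  have "G x \<bullet> (y - x) \<ge> 0" if "y \<in> D" for y
  proof -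
    have "inner ((x - G x) - closest_point D (x - G x)) (y - closest_point D (x - G x)) \<le> 0"
      by (rule closest_point_dot[OF assms(2) cl that])
    then show ?thesis using x(2) by (simp add: f_def inner_diff_left)
  qed
  then show ?thesis using x(1) by (auto simp: vi_def)
qed

lemma vi_local_global:
  fixes G :: "'a::real_inner \<Rightarrow> 'a"
  assumes "convex K" "x \<in> vi (K \<inter> cball 0 r) G" "norm x < r"
  shows "x \<in> vi K G"
proof -
  have xK: "x \<in> K" using assms(2) by (auto simp: vi_def)
  have "G x \<bullet> (y - x) \<ge> 0" if y: "y \<in> K" for y
  proof -
    define t where "t = min 1 ((r - norm x) / (norm (y - x) + 1))"
    have t0: "t > 0" using assms(3) by (auto simp: t_def intro!: divide_pos_pos add_nonneg_pos)
    have t1: "t \<le> 1" by (simp add: t_def)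
    have "t * norm (y - x) \<le> (r - norm x) / (norm (y - x) + 1) * (norm (y - x) + 1)"
      unfolding t_def using assms(3)
      by (intro mult_mono) auto
    then have tn: "t * norm (y - x) \<le> r - norm x"
    proof -
      have nz: "norm (y - x) + 1 \<noteq> 0" by (metis add_nonneg_pos norm_ge_zero zero_less_one less_irrefl)
      show ?thesis using \<open>t * norm (y - x) \<le> _\<close> nz by simp
    qed
    define z where "z = x + t *\<^sub>R (y - x)"
    have "z = (1 - t) *\<^sub>R x + t *\<^sub>R y" by (simp add: z_def algebra_simps)
    then have zK: "z \<in> K" using assms(1) xK y t0 t1 by (simp add: convex_def)
    have "norm z \<le> norm x + norm (t *\<^sub>R (y - x))"
      unfolding z_def by (rule norm_triangle_ineq)
    then have "norm z \<le> norm x + t * norm (y - x)" using t0 by simp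
    then have "z \<in> cball 0 r" using tn by simp
    then have "G x \<bullet> (z - x) \<ge> 0" using assms(2) zK by (auto simp: vi_def)
    then have "t * (G x \<bullet> (y - x)) \<ge> 0" by (simp add: z_def)
    then show ?thesis using t0 by (simp add: zero_le_mult_iff)
  qed
  then show ?thesis using xK by (auto simp: vi_def)
qed

lemma monotone_map_on_subset: "monotone_map_on K G \<Longrightarrow> D \<subseteq> K \<Longrightarrow> monotone_map_on D G"
  by (auto simp: monotone_map_on_def)

lemma vi_bounded_trunc:
  fixes G :: "'a::real_inner \<Rightarrow> 'a"
  assumes "convex K" "continuous_on K G" "monotone_map_on K G"
    and ne: "xs \<in> vi K G" and sub: "vi K G \<subseteq> ball 0 \<rho>" and "\<rho> < r"
  shows "vi (K \<inter> cball 0 r) G \<subseteq> ball 0 \<rho>"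
proof
  fix x assume x: "x \<in> vi (K \<inter> cball 0 r) G"
  let ?D = "K \<inter> cball 0 r"
  have cD: "convex ?D" using assms(1) by (simp add: convex_Int)
  have contD: "continuous_on ?D G" using assms(2) by (rule continuous_on_subset) auto
  have monD: "monotone_map_on ?D G" using assms(3) by (rule monotone_map_on_subset) auto
  show "x \<in> ball 0 \<rho>"
  proof (rule ccontr)
    assume "x \<notin> ball 0 \<rho>"
    then have nx: "\<rho> \<le> norm x" by simp
    have nxs: "norm xs \<le> \<rho>" using ne sub by auto
    obtain s where s: "0 \<le> s" "s \<le> 1" "norm ((1 - s) *\<^sub>R xs + s *\<^sub>R x) = \<rho>"
      using seg_norm[OF nxs nx] by blast
    define z where "z = (1 - s) *\<^sub>R xs + s *\<^sub>R x"
    have xsK: "xs \<in> K" and xD: "x \<in> ?D" using ne x by (auto simp: vi_def)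
    have zK: "z \<in> K" using assms(1) xsK xD s by (auto simp: z_def convex_def)
    have zD: "z \<in> ?D" using zK s(3) \<open>\<rho> < r\<close> by (simp add: z_def)
    have "\<forall>y\<in>?D. G y \<bullet> (y - z) \<ge> 0"
    proof
      fix y assume y: "y \<in> ?D"
      have 1: "G y \<bullet> (y - xs) \<ge> 0" using minty1[OF assms(3) ne] y by auto
      have 2: "G y \<bullet> (y - x) \<ge> 0" using minty1[OF monD x y] .
      have "y - z = (1 - s) *\<^sub>R (y - xs) + s *\<^sub>R (y - x)"
        by (simp add: z_def algebra_simps)
      then show "G y \<bullet> (y - z) \<ge> 0" using 1 2 s by (simp add: inner_add_right)
    qed
    then have "z \<in> vi ?D G" by (rule minty2[OF cD contD zD])
    then have "z \<in> vi K G" using vi_local_global[OF assms(1)] s(3) \<open>\<rho> < r\<close> z_def by auto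
    then show False using sub s(3) z_def by auto
  qed
qed

definition jcont :: "real set \<Rightarrow> 'a::topological_space set \<Rightarrow> (real \<Rightarrow> 'a \<Rightarrow> 'a) \<Rightarrow> bool" where
  "jcont I K G \<longleftrightarrow> (\<forall>ts t xs x. (\<forall>n. ts n \<in> I) \<longrightarrow> ts \<longlonglongrightarrow> t \<longrightarrow> t \<in> I \<longrightarrow>
       (\<forall>n. xs n \<in> K) \<longrightarrow> xs \<longlonglongrightarrow> x \<longrightarrow> x \<in> K \<longrightarrow> (\<lambda>n. G (ts n) (xs n)) \<longlonglongrightarrow> G t x)"

lemma vi_limit:
  fixes G :: "real \<Rightarrow> 'a::real_inner \<Rightarrow> 'a"
  assumes "jcont I K G" "D \<subseteq> K" "closed D" "\<And>n. ts n \<in> I" "ts \<longlonglongrightarrow> t" "t \<in> I"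
    and xs: "\<And>n. xs n \<in> vi D (G (ts n))" "xs \<longlonglongrightarrow> x"
  shows "x \<in> vi D (G t)"
proof -
  have xsD: "xs n \<in> D" for n using xs(1) by (auto simp: vi_def)
  have xD: "x \<in> D" using closed_sequentially[OF assms(3) xsD xs(2)] .
  have lim: "(\<lambda>n. G (ts n) (xs n)) \<longlonglongrightarrow> G t x"
    using assms(1,2,4,5,6) xsD xs(2) xD unfolding jcont_def by blast
  have "G t x \<bullet> (y - x) \<ge> 0" if y: "y \<in> D" for y
  proof -
    have "(\<lambda>n. G (ts n) (xs n) \<bullet> (y - xs n)) \<longlonglongrightarrow> G t x \<bullet> (y - x)"
      by (intro tendsto_intros lim xs(2))
    moreover have "G (ts n) (xs n) \<bullet> (y - xs n) \<ge> 0" for n using xs(1)[of n] y by (auto simp: vi_def)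
    ultimately show ?thesis by (meson LIMSEQ_le_const)
  qed
  then show ?thesis using xD by (auto simp: vi_def)
qed

lemma vi_usc:
  fixes G :: "real \<Rightarrow> 'a::euclidean_space \<Rightarrow> 'a"
  assumes clK: "closed K" and cK: "convex K" and jc: "jcont I K G"
    and GI: "\<And>t. t \<in> I \<Longrightarrow> continuous_on K (G t) \<and> monotone_map_on K (G t)"
    and t0: "t0 \<in> I" and ne: "vi K (G t0) \<noteq> {}" and bd: "vi K (G t0) \<subseteq> ball 0 \<rho>"
    and U: "open U" "vi K (G t0) \<subseteq> U"
  shows "\<exists>\<delta>>0. \<forall>t\<in>I. \<bar>t - t0\<bar> < \<delta> \<longrightarrow> vi K (G t) \<noteq> {} \<and> vi K (G t) \<subseteq> U"
proof -
  define r where "r = \<rho> + 1"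
  define D where "D = K \<inter> cball 0 r"
  define U' where "U' = U \<inter> ball 0 (\<rho> + 1/2)"
  obtain xs where xs: "xs \<in> vi K (G t0)" using ne by blast
  have cD: "compact D" unfolding D_def by (intro closed_Int_compact clK compact_cball)
  have clD: "closed D" using cD by (simp add: compact_imp_closed)
  have cvD: "convex D" unfolding D_def using cK by (simp add: convex_Int)
  have DK: "D \<subseteq> K" by (simp add: D_def)
  have xsD: "xs \<in> D" using xs bd by (auto simp: vi_def D_def r_def)
  have t0D: "vi D (G t0) \<subseteq> ball 0 \<rho>"
    unfolding D_def r_def using GI[OF t0] cK xs bd by (intro vi_bounded_trunc) auto
  have t0D': "vi D (G t0) \<subseteq> U'"
  proof
    fix x assume x: "x \<in> vi D (G t0)"
    then have "norm x < \<rho>" using t0D by auto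
    then have "x \<in> vi K (G t0)" using vi_local_global[OF cK, of x r] x by (simp add: D_def r_def)
    then show "x \<in> U'" using U(2) \<open>norm x < \<rho>\<close> by (auto simp: U'_def)
  qed
  have oU': "open U'" using U(1) by (simp add: U'_def open_Int)
  have claim: "\<exists>\<delta>>0. \<forall>t\<in>I. \<bar>t - t0\<bar> < \<delta> \<longrightarrow> vi D (G t) \<subseteq> U'"
  proof (rule ccontr)
    assume nc: "\<not> ?thesis"
    have ex: "\<exists>p. fst p \<in> I \<and> \<bar>fst p - t0\<bar> < 1 / real (Suc n) \<and> snd p \<in> vi D (G (fst p)) \<and> snd p \<notin> U'" for n
    proof -
      have "(1::real) / real (Suc n) > 0" by simp
      then obtain t where "t \<in> I" "\<bar>t - t0\<bar> < 1 / real (Suc n)" "\<not> vi D (G t) \<subseteq> U'"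
        using nc by blast
      then obtain x where "x \<in> vi D (G t)" "x \<notin> U'" by blast
      then show ?thesis using \<open>t \<in> I\<close> \<open>\<bar>t - t0\<bar> < 1 / real (Suc n)\<close>
        by (intro exI[of _ "(t, x)"]) simp
    qed
    then have "\<exists>f. \<forall>n. fst (f n) \<in> I \<and> \<bar>fst (f n) - t0\<bar> < 1 / real (Suc n) \<and> snd (f n) \<in> vi D (G (fst (f n))) \<and> snd (f n) \<notin> U'"
      by (intro choice allI)
    then obtain f where f: "\<And>n. fst (f n) \<in> I \<and> \<bar>fst (f n) - t0\<bar> < 1 / real (Suc n) \<and> snd (f n) \<in> vi D (G (fst (f n))) \<and> snd (f n) \<notin> U'"
      by blast
    define ts where "ts = (\<lambda>n. fst (f n))"
    define xs where "xs = (\<lambda>n. snd (f n))"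
    have tsI: "\<And>n. ts n \<in> I" and tsc: "\<And>n. \<bar>ts n - t0\<bar> < 1 / real (Suc n)"
      and xsv: "\<And>n. xs n \<in> vi D (G (ts n))" and xsU: "\<And>n. xs n \<notin> U'"
      using f by (auto simp: ts_def xs_def)
    have tslim: "ts \<longlonglongrightarrow> t0"
    proof (rule LIMSEQ_I)
      fix e :: real assume "e > 0"
      then obtain N where N: "1 / real (Suc N) < e"
        using nat_approx_posE[OF \<open>e > 0\<close>] by blast
      have "norm (ts n - t0) < e" if "n \<ge> N" for n
      proof -
        have "1 / real (Suc n) \<le> 1 / real (Suc N)" using that by (simp add: frac_le)
        then show ?thesis using tsc[of n] N by simp
      qed
      then show "\<exists>N. \<forall>n\<ge>N. norm (ts n - t0) < e" by blast
    qed
    have "\<forall>n. xs n \<in> D" using xsv by (auto simp: vi_def)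
    then obtain l rr where l: "l \<in> D" "strict_mono rr" "(xs \<circ> rr) \<longlonglongrightarrow> l"
      using seq_compactE[OF compact_imp_seq_compact[OF cD]] by blast
    have "l \<in> vi D (G t0)"
      by (rule vi_limit[OF jc DK clD, of "ts \<circ> rr" t0 "xs \<circ> rr"])
         (use tsI t0 xsv l LIMSEQ_subseq_LIMSEQ[OF tslim l(2)] in auto)
    then have "l \<in> U'" using t0D' by auto
    then have "eventually (\<lambda>n. (xs \<circ> rr) n \<in> U') sequentially"
      using l(3) oU' by (simp add: tendsto_def)
    then obtain n where "(xs \<circ> rr) n \<in> U'" by (meson eventually_sequentially order.refl)
    then show False using xsU by simp
  qed
  then obtain \<delta> where d: "\<delta> > 0" "\<forall>t\<in>I. \<bar>t - t0\<bar> < \<delta> \<longrightarrow> vi D (G t) \<subseteq> U'" by blast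
  have "vi K (G t) \<noteq> {} \<and> vi K (G t) \<subseteq> U" if t: "t \<in> I" "\<bar>t - t0\<bar> < \<delta>" for t
  proof -
    have contD: "continuous_on D (G t)" using GI[OF t(1)] DK continuous_on_subset by blast
    have sub: "vi D (G t) \<subseteq> U'" using d t by blast
    obtain x where x: "x \<in> vi D (G t)" using hartman_stampacchia[OF cD cvD _ contD] xsD by blast
    have nx: "norm x < \<rho> + 1/2" using sub x by (auto simp: U'_def)
    have xK: "x \<in> vi K (G t)"
      using vi_local_global[OF cK, of x r "G t"] x nx by (simp add: D_def r_def)
    have "vi K (G t) \<subseteq> U'"
    proof
      fix w assume w: "w \<in> vi K (G t)"
      have cvx: "convex (vi K (G t))" using GI[OF t(1)] cK by (intro vi_convex) auto
      have restr: "z \<in> vi D (G t)" if "z \<in> vi K (G t)" "norm z \<le> r" for z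
        using that by (auto simp: vi_def D_def)
      have nw: "norm w < \<rho> + 1/2"
      proof (rule ccontr)
        assume "\<not> ?thesis"
        then obtain s where s: "0 \<le> s" "s \<le> 1" "norm ((1 - s) *\<^sub>R x + s *\<^sub>R w) = \<rho> + 1/2"
          using seg_norm[of x "\<rho> + 1/2" w] nx by force
        have "(1 - s) *\<^sub>R x + s *\<^sub>R w \<in> vi K (G t)"
          using cvx xK w s by (simp add: convex_def)
        then have "(1 - s) *\<^sub>R x + s *\<^sub>R w \<in> vi D (G t)" using restr s(3) by (simp add: r_def)
        then show False using sub s(3) by (auto simp: U'_def)
      qed
      then have "w \<in> vi D (G t)" using restr w by (simp add: r_def)
      then show "w \<in> U'" using sub by auto
    qed
    then show ?thesis using xK by (auto simp: U'_def)
  qed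
  then show ?thesis using d(1) by blast
qed

lemma usc_union_connected:
  fixes \<Phi> :: "real \<Rightarrow> 'a::metric_space set"
  assumes X: "connected X" and ne: "\<And>t. t \<in> X \<Longrightarrow> \<Phi> t \<noteq> {} \<and> connected (\<Phi> t)"
    and usc: "\<And>t U. t \<in> X \<Longrightarrow> open U \<Longrightarrow> \<Phi> t \<subseteq> U \<Longrightarrow> (\<exists>\<delta>>0. \<forall>t'\<in>X. \<bar>t' - t\<bar> < \<delta> \<longrightarrow> \<Phi> t' \<subseteq> U)"
  shows "connected (\<Union>t\<in>X. \<Phi> t)"
  unfolding connected_def
proof (rule notI, elim exE conjE)
  let ?Y = "\<Union>t\<in>X. \<Phi> t"
  fix A B assume A: "open A" and B: "open B" and cov: "?Y \<subseteq> A \<union> B" and dis: "A \<inter> B \<inter> ?Y = {}"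
    and Ane: "A \<inter> ?Y \<noteq> {}" and Bne: "B \<inter> ?Y \<noteq> {}"
  have split: "\<Phi> t \<subseteq> A \<or> \<Phi> t \<subseteq> B" if t: "t \<in> X" for t
  proof -
    have "A \<inter> \<Phi> t = {} \<or> B \<inter> \<Phi> t = {}"
      using connectedD[OF conjunct2[OF ne[OF t]] A B] cov dis t by blast
    then show ?thesis using cov t by blast
  qed
  define X1 where "X1 = {t\<in>X. \<Phi> t \<subseteq> A}"
  define X2 where "X2 = {t\<in>X. \<Phi> t \<subseteq> B}"
  have op: "openin (top_of_set X) {t\<in>X. \<Phi> t \<subseteq> E}" if oE: "open E" for E
    unfolding openin_euclidean_subtopology_iff
  proof (intro conjI ballI)
    fix t assume t: "t \<in> {t\<in>X. \<Phi> t \<subseteq> E}"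
    then have "t \<in> X" "\<Phi> t \<subseteq> E" by auto
    then obtain \<delta> where "\<delta> > 0" "\<forall>t'\<in>X. \<bar>t' - t\<bar> < \<delta> \<longrightarrow> \<Phi> t' \<subseteq> E"
      using usc[of t E] oE by blast
    then show "\<exists>e>0. \<forall>x'\<in>X. dist x' t < e \<longrightarrow> x' \<in> {t\<in>X. \<Phi> t \<subseteq> E}"
      by (auto simp: dist_real_def)
  qed auto
  have "\<not> (\<exists>E1 E2. openin (top_of_set X) E1 \<and> openin (top_of_set X) E2 \<and>
                 X \<subseteq> E1 \<union> E2 \<and> E1 \<inter> E2 = {} \<and> E1 \<noteq> {} \<and> E2 \<noteq> {})"
    using X connected_openin by blast
  moreover have "openin (top_of_set X) X1" "openin (top_of_set X) X2"
    using op A B by (auto simp: X1_def X2_def)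
  moreover have "X \<subseteq> X1 \<union> X2" using split by (auto simp: X1_def X2_def)
  moreover have "X1 \<inter> X2 = {}"
  proof (rule ccontr)
    assume "X1 \<inter> X2 \<noteq> {}"
    then obtain t where t: "t \<in> X" "\<Phi> t \<subseteq> A" "\<Phi> t \<subseteq> B" by (auto simp: X1_def X2_def)
    then obtain z where "z \<in> \<Phi> t" using ne by blast
    then show False using t dis by blast
  qed
  moreover have "X1 \<noteq> {}"
  proof -
    obtain t z where tz: "t \<in> X" "z \<in> \<Phi> t" "z \<in> A" using Ane by blast
    have "\<Phi> t \<subseteq> A" using split[OF tz(1)] tz dis by blast
    then show ?thesis using tz by (auto simp: X1_def)
  qed
  moreover have "X2 \<noteq> {}"
  proof -
    obtain t z where tz: "t \<in> X" "z \<in> \<Phi> t" "z \<in> B" using Bne by blast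
    have "\<Phi> t \<subseteq> B" using split[OF tz(1)] tz dis by blast
    then show ?thesis using tz by (auto simp: X2_def)
  qed
  ultimately show False by blast
qed

definition Fw :: "('m::finite \<Rightarrow> 'a \<Rightarrow> 'a) \<Rightarrow> ('m \<Rightarrow> real) \<Rightarrow> 'a \<Rightarrow> 'a::real_vector" where
  "Fw F w x = (\<Sum>l\<in>UNIV. w l *\<^sub>R F l x)"

lemma scal_sub_pareto:
  fixes F :: "'m::finite \<Rightarrow> 'a::real_inner \<Rightarrow> 'a"
  assumes w: "\<And>l. w l > 0" and x: "x \<in> vi K (Fw F w)"
  shows "x \<in> pareto_sol F K"
proof -
  have xK: "x \<in> K" using x by (auto simp: vi_def)
  have "\<not> ((\<forall>l. F l x \<bullet> (x - y) \<ge> 0) \<and> (\<exists>l. F l x \<bullet> (x - y) > 0))" if y: "y \<in> K" for y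
  proof
    assume h: "(\<forall>l. F l x \<bullet> (x - y) \<ge> 0) \<and> (\<exists>l. F l x \<bullet> (x - y) > 0)"
    then obtain l0 where l0: "F l0 x \<bullet> (x - y) > 0" by blast
    have "0 < (\<Sum>l\<in>UNIV. w l * (F l x \<bullet> (x - y)))"
    proof (rule sum_pos2[where i=l0])
      show "0 < w l0 * (F l0 x \<bullet> (x - y))" using w[of l0] l0 by simp
      show "0 \<le> w i * (F i x \<bullet> (x - y))" for i using w[of i] h by (simp add: less_imp_le)
    qed auto
    also have "\<dots> = Fw F w x \<bullet> (x - y)" by (simp add: Fw_def inner_sum_left)
    also have "\<dots> = - (Fw F w x \<bullet> (y - x))" by (simp add: inner_diff_right)
    finally show False using x y by (auto simp: vi_def)
  qed
  then show ?thesis using xK by (auto simp: pareto_sol_def)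
qed

lemma cc_range:
  fixes v :: "'m::finite \<Rightarrow> 'a::real_vector"
  shows "convex_cone hull (range v) \<subseteq> {\<Sum>l\<in>UNIV. \<mu> l *\<^sub>R v l | \<mu>. \<forall>l. \<mu> l \<ge> 0}"
proof (rule hull_minimal)
  show "range v \<subseteq> {\<Sum>l\<in>UNIV. \<mu> l *\<^sub>R v l | \<mu>. \<forall>l. \<mu> l \<ge> 0}"
  proof clarify
    fix l0
    have "v l0 = (\<Sum>l\<in>UNIV. (if l = l0 then 1 else 0) *\<^sub>R v l)"
      by (simp add: if_distrib[of "\<lambda>c. c *\<^sub>R _"] cong: if_cong)
    then show "\<exists>\<mu>. v l0 = (\<Sum>l\<in>UNIV. \<mu> l *\<^sub>R v l) \<and> (\<forall>l. 0 \<le> \<mu> l)"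
      by (intro exI[of _ "\<lambda>l. if l = l0 then 1 else 0"]) auto
  qed
  show "convex_cone {\<Sum>l\<in>UNIV. \<mu> l *\<^sub>R v l | \<mu>. \<forall>l. \<mu> l \<ge> 0}"
    unfolding convex_cone_iff
  proof (intro conjI ballI allI impI)
    show "0 \<in> {\<Sum>l\<in>UNIV. \<mu> l *\<^sub>R v l | \<mu>. \<forall>l. \<mu> l \<ge> 0}"
      by (intro CollectI exI[of _ "\<lambda>l. 0"]) auto
  next
    fix p q assume "p \<in> {\<Sum>l\<in>UNIV. \<mu> l *\<^sub>R v l | \<mu>. \<forall>l. \<mu> l \<ge> 0}"
      "q \<in> {\<Sum>l\<in>UNIV. \<mu> l *\<^sub>R v l | \<mu>. \<forall>l. \<mu> l \<ge> 0}"
    then obtain \<mu> \<nu> where "p = (\<Sum>l\<in>UNIV. \<mu> l *\<^sub>R v l)" "\<forall>l. \<mu> l \<ge> 0"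
      "q = (\<Sum>l\<in>UNIV. \<nu> l *\<^sub>R v l)" "\<forall>l. \<nu> l \<ge> 0" by blast
    then show "p + q \<in> {\<Sum>l\<in>UNIV. \<mu> l *\<^sub>R v l | \<mu>. \<forall>l. \<mu> l \<ge> 0}"
      by (intro CollectI exI[of _ "\<lambda>l. \<mu> l + \<nu> l"]) (auto simp: scaleR_add_left sum.distrib)
  next
    fix p and c :: real assume "p \<in> {\<Sum>l\<in>UNIV. \<mu> l *\<^sub>R v l | \<mu>. \<forall>l. \<mu> l \<ge> 0}" "0 \<le> c"
    then obtain \<mu> where "p = (\<Sum>l\<in>UNIV. \<mu> l *\<^sub>R v l)" "\<forall>l. \<mu> l \<ge> 0" by blast
    then show "c *\<^sub>R p \<in> {\<Sum>l\<in>UNIV. \<mu> l *\<^sub>R v l | \<mu>. \<forall>l. \<mu> l \<ge> 0}"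
      using \<open>0 \<le> c\<close> by (intro CollectI exI[of _ "\<lambda>l. c * \<mu> l"]) (auto simp: scaleR_sum_right)
  qed
qed

lemma pareto_sub_scal:
  fixes F :: "'m::finite \<Rightarrow> 'a::euclidean_space \<Rightarrow> 'a"
  assumes poly: "polyhedron K" and x: "x \<in> pareto_sol F K"
  shows "\<exists>w. (\<forall>l. w l > 0) \<and> x \<in> vi K (Fw F w)"
proof -
  obtain Fs where Fs: "finite Fs" "K = \<Inter> Fs" "\<forall>h\<in>Fs. \<exists>a b. a \<noteq> 0 \<and> h = {x. a \<bullet> x \<le> b}"
    using poly unfolding polyhedron_def by blast
  have "\<forall>h\<in>Fs. \<exists>p. h = {z. fst p \<bullet> z \<le> snd p}" using Fs(3) by fastforce
  then have "\<exists>p. \<forall>h\<in>Fs. h = {z. fst (p h) \<bullet> z \<le> snd (p h)}" by (rule bchoice)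
  then obtain p where p: "\<forall>h\<in>Fs. h = {z. fst (p h) \<bullet> z \<le> snd (p h)}" by blast
  define a where "a h = fst (p h)" for h
  define b where "b h = snd (p h)" for h
  have memK: "z \<in> K \<longleftrightarrow> (\<forall>h\<in>Fs. a h \<bullet> z \<le> b h)" for z
    using p Fs(2) unfolding a_def b_def by auto
  have xK: "x \<in> K" and xP: "\<And>y. y \<in> K \<Longrightarrow> \<not> ((\<forall>l. F l x \<bullet> (x - y) \<ge> 0) \<and> (\<exists>l. F l x \<bullet> (x - y) > 0))"
    using x by (auto simp: pareto_sol_def)
  define Act where "Act = {h\<in>Fs. a h \<bullet> x = b h}"
  define c where "c l = F l x" for l
  define G' where "G' = convex_cone hull ((\<lambda>h. - a h) ` Act \<union> range (\<lambda>l. - c l))"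
  define s where "s = (\<Sum>l\<in>UNIV. c l)"
  have finG: "finite ((\<lambda>h. - a h) ` Act \<union> range (\<lambda>l. - c l))" using Fs(1) by (simp add: Act_def)
  show ?thesis
  proof (cases "s \<in> G'")
    case True
    then obtain g q where g: "g \<in> convex_cone hull ((\<lambda>h. - a h) ` Act)"
      and q: "q \<in> convex_cone hull (range (\<lambda>l. - c l))" and sgq: "s = g + q"
      unfolding G'_def convex_cone_hull_Un by blast
    obtain \<mu> where \<mu>: "q = (\<Sum>l\<in>UNIV. \<mu> l *\<^sub>R (- c l))" "\<forall>l. \<mu> l \<ge> 0"
      using cc_range q by blast
    define w where "w l = 1 + \<mu> l" for l
    have wpos: "\<forall>l. w l > 0" using \<mu>(2) by (simp add: w_def add_pos_nonneg)
    have Fwx: "Fw F w x = g"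
    proof -
      have "Fw F w x = (\<Sum>l\<in>UNIV. c l + \<mu> l *\<^sub>R c l)"
        by (simp add: Fw_def w_def c_def scaleR_add_left)
      also have "\<dots> = s + (\<Sum>l\<in>UNIV. \<mu> l *\<^sub>R c l)" by (simp add: s_def sum.distrib)
      also have "\<dots> = g" using sgq \<mu>(1) by (simp add: sum_negf)
      finally show ?thesis .
    qed
    have "g \<bullet> (y - x) \<ge> 0" if y: "y \<in> K" for y
    proof -
      have "convex_cone hull ((\<lambda>h. - a h) ` Act) \<subseteq> {v. (x - y) \<bullet> v \<le> 0}"
      proof (rule hull_minimal)
        show "(\<lambda>h. - a h) ` Act \<subseteq> {v. (x - y) \<bullet> v \<le> 0}"
        proof clarify
          fix h assume h: "h \<in> Act"
          have "a h \<bullet> y \<le> b h" using y memK h by (auto simp: Act_def)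
          moreover have "a h \<bullet> x = b h" using h by (auto simp: Act_def)
          ultimately show "(x - y) \<bullet> - a h \<le> 0" by (simp add: inner_commute inner_diff_right)
        qed
      qed (rule convex_cone_halfspace_le)
      then have "(x - y) \<bullet> g \<le> 0" using g by blast
      then show ?thesis by (simp add: inner_commute inner_diff_right inner_diff_left)
    qed
    then have "x \<in> vi K (Fw F w)" using xK Fwx by (simp add: vi_def)
    then show ?thesis using wpos by blast
  next
    case False
    have cvG: "convex G'" unfolding G'_def by (rule convex_convex_cone_hull)
    have clG: "closed G'" unfolding G'_def using finG by (rule closed_convex_cone_hull)
    obtain d \<beta> where d: "d \<bullet> s < \<beta>" "\<forall>v\<in>G'. d \<bullet> v > \<beta>"
      using separating_hyperplane_closed_point[OF cvG clG False] by blast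
    have "0 \<in> G'" unfolding G'_def by (rule convex_cone_hull_contains_0)
    then have \<beta>: "\<beta> < 0" using d(2) by force
    have nn: "d \<bullet> v \<ge> 0" if v: "v \<in> G'" for v
    proof (rule ccontr)
      assume "\<not> ?thesis"
      then have neg: "d \<bullet> v < 0" by simp
      define k where "k = \<beta> / (d \<bullet> v)"
      have "k \<ge> 0" using neg \<beta> by (simp add: k_def divide_nonpos_neg less_imp_le zero_le_divide_iff)
      then have "k *\<^sub>R v \<in> G'" using v unfolding G'_def by (rule convex_cone_hull_mul[rotated])
      moreover have "d \<bullet> (k *\<^sub>R v) = \<beta>" using neg by (simp add: k_def)
      ultimately show False using d(2) by force
    qed
    have dA: "a h \<bullet> d \<le> 0" if "h \<in> Act" for h
    proof -
      have "- a h \<in> G'" unfolding G'_def using that by (intro hull_inc) auto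
      then show ?thesis using nn[of "- a h"] by (simp add: inner_commute)
    qed
    have dC: "c l \<bullet> d \<le> 0" for l
    proof -
      have "- c l \<in> G'" unfolding G'_def by (intro hull_inc) auto
      then show ?thesis using nn[of "- c l"] by (simp add: inner_commute)
    qed
    have ds: "s \<bullet> d < 0" using d(1) \<beta> by (simp add: inner_commute)
    have ev: "\<forall>\<^sub>F t in at_right 0. \<forall>h\<in>Fs. a h \<bullet> (x + t *\<^sub>R d) \<le> b h"
    proof (rule eventually_ball_finite[OF Fs(1)], rule ballI)
      fix h assume h: "h \<in> Fs"
      show "\<forall>\<^sub>F t in at_right 0. a h \<bullet> (x + t *\<^sub>R d) \<le> b h"
      proof (cases "h \<in> Act")
        case True
        show ?thesis
        proof (rule eventually_mono[OF eventually_at_right_less])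
          fix t :: real assume "0 < t"
          then have "t * (a h \<bullet> d) \<le> 0" using dA[OF True] by (simp add: mult_nonneg_nonpos)
          then show "a h \<bullet> (x + t *\<^sub>R d) \<le> b h" using True by (simp add: Act_def inner_add_right)
        qed
      next
        case False
        have "a h \<bullet> x \<le> b h" using xK memK h by blast
        then have lt: "a h \<bullet> x < b h" using False h by (simp add: Act_def)
        have "((\<lambda>t. a h \<bullet> (x + t *\<^sub>R d)) \<longlongrightarrow> a h \<bullet> (x + 0 *\<^sub>R d)) (at_right 0)"
          by (intro tendsto_intros)
        then have "\<forall>\<^sub>F t in at_right 0. a h \<bullet> (x + t *\<^sub>R d) < b h"
          using lt by (intro order_tendstoD(2)) auto
        then show ?thesis by (rule eventually_mono) simp
      qed
    qed
    have "\<forall>\<^sub>F t in at_right 0. 0 < t \<and> (\<forall>h\<in>Fs. a h \<bullet> (x + t *\<^sub>R d) \<le> b h)"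
      using ev eventually_at_right_less by (rule eventually_conj[rotated])
    then obtain t where t: "0 < t" "\<forall>h\<in>Fs. a h \<bullet> (x + t *\<^sub>R d) \<le> b h"
      using eventually_happens trivial_limit_at_right_real by blast
    define y where "y = x + t *\<^sub>R d"
    have yK: "y \<in> K" using t memK by (simp add: y_def)
    have 1: "F l x \<bullet> (x - y) = - t * (c l \<bullet> d)" for l by (simp add: y_def c_def)
    have all: "\<forall>l. F l x \<bullet> (x - y) \<ge> 0"
      using dC t(1) by (simp add: 1 mult_nonneg_nonpos)
    have "\<exists>l. F l x \<bullet> (x - y) > 0"
    proof (rule ccontr)
      assume nex: "\<not> ?thesis"
      have "c l \<bullet> d \<ge> 0" for l
      proof -
        have "\<not> F l x \<bullet> (x - y) > 0" using nex by blast
        then have "t * (c l \<bullet> d) \<ge> 0" by (simp add: 1)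
        then show ?thesis using t(1) by (simp add: zero_le_mult_iff)
      qed
      then have "s \<bullet> d \<ge> 0" by (simp add: s_def inner_sum_left sum_nonneg)
      then show False using ds by simp
    qed
    then show ?thesis using xP[OF yK] all by blast
  qed
qed

lemma Fw_cont:
  fixes F :: "'m::finite \<Rightarrow> 'a::real_normed_vector \<Rightarrow> 'a"
  assumes "\<And>l. continuous_on K (F l)"
  shows "continuous_on K (Fw F w)"
  unfolding Fw_def by (intro continuous_on_sum continuous_on_scaleR continuous_on_const assms)

lemma Fw_mono:
  fixes F :: "'m::finite \<Rightarrow> 'a::real_inner \<Rightarrow> 'a"
  assumes "\<And>l. monotone_map_on K (F l)" "\<And>l. w l \<ge> 0"
  shows "monotone_map_on K (Fw F w)"
  unfolding monotone_map_on_def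
proof (intro ballI)
  fix x y assume xy: "x \<in> K" "y \<in> K"
  have "(Fw F w y - Fw F w x) \<bullet> (y - x) = (\<Sum>l\<in>UNIV. w l * ((F l y - F l x) \<bullet> (y - x)))"
  proof -
    have "Fw F w y - Fw F w x = (\<Sum>l\<in>UNIV. w l *\<^sub>R (F l y - F l x))"
      by (simp add: Fw_def scaleR_diff_right sum_subtractf)
    then show ?thesis by (simp add: inner_sum_left)
  qed
  also have "\<dots> \<ge> 0"
    using assms xy by (intro sum_nonneg mult_nonneg_nonneg) (auto simp: monotone_map_on_def)
  finally show "(Fw F w y - Fw F w x) \<bullet> (y - x) \<ge> 0" .
qed

lemma comp_absorb:
  assumes "connected T" "T \<subseteq> S" "z \<in> T" "z \<in> connected_component_set S x0"
  shows "T \<subseteq> connected_component_set S x0"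
  using connected_component_maximal[OF assms(3,1,2)] connected_component_eq[OF assms(4)] by simp

lemma pos_comb:
  fixes a b t :: real
  assumes "a > 0" "b > 0" "0 \<le> t" "t \<le> 1"
  shows "(1 - t) * a + t * b > 0"
proof -
  have "(1 - t) * a \<ge> (1 - t) * min a b" "t * b \<ge> t * min a b"
    using assms by (intro mult_left_mono; simp)+
  then have "(1 - t) * a + t * b \<ge> (1 - t) * min a b + t * min a b" by linarith
  also have "(1 - t) * min a b + t * min a b = min a b" by (simp add: algebra_simps)
  finally show ?thesis using assms by simp
qed

lemma main_comp:
  fixes F :: "'m::finite \<Rightarrow> 'a::euclidean_space \<Rightarrow> 'a"
  assumes clK: "closed K" and cK: "convex K" and poly: "polyhedron K"
    and contF: "\<And>l. continuous_on K (F l)" and monF: "\<And>l. monotone_map_on K (F l)"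
    and x0: "x0 \<in> pareto_sol F K"
    and bdC: "bounded (connected_component_set (pareto_sol F K) x0)"
  shows "pareto_sol F K \<subseteq> connected_component_set (pareto_sol F K) x0"
proof
  define Sol where "Sol = pareto_sol F K"
  define C where "C = connected_component_set Sol x0"
  fix x1 assume x1: "x1 \<in> pareto_sol F K"
  obtain \<xi>0 where \<xi>0: "\<forall>l. \<xi>0 l > 0" "x0 \<in> vi K (Fw F \<xi>0)" using pareto_sub_scal[OF poly x0] by blast
  obtain \<xi>1 where \<xi>1: "\<forall>l. \<xi>1 l > 0" "x1 \<in> vi K (Fw F \<xi>1)" using pareto_sub_scal[OF poly x1] by blast
  define I where "I = {0..1::real}"
  define G where "G t = Fw F (\<lambda>l. (1 - t) * \<xi>0 l + t * \<xi>1 l)" for t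
  define S where "S t = vi K (G t)" for t
  have wpos: "(1 - t) * \<xi>0 l + t * \<xi>1 l > 0" if "t \<in> I" for t l
    using pos_comb[of "\<xi>0 l" "\<xi>1 l" t] \<xi>0 \<xi>1 that by (auto simp: I_def)
  have GI: "continuous_on K (G t) \<and> monotone_map_on K (G t)" if "t \<in> I" for t
    unfolding G_def using contF monF wpos[OF that] by (intro conjI Fw_cont Fw_mono less_imp_le) auto
  have jc: "jcont I K G"
    unfolding jcont_def
  proof (intro allI impI)
    fix ts t xs x assume h: "\<forall>n. ts n \<in> I" "ts \<longlonglongrightarrow> t" "t \<in> I" "\<forall>n. xs n \<in> K" "xs \<longlonglongrightarrow> x" "x \<in> K"
    have Fl: "(\<lambda>n. F l (xs n)) \<longlonglongrightarrow> F l x" for l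
      using continuous_on_sequentially[THEN iffD1, OF contF[of l]] h(4,5,6) by (auto simp: o_def)
    show "(\<lambda>n. G (ts n) (xs n)) \<longlonglongrightarrow> G t x"
      unfolding G_def Fw_def by (intro tendsto_intros Fl h(2))
  qed
  have SSol: "S t \<subseteq> Sol" if "t \<in> I" for t
    using scal_sub_pareto[where w="\<lambda>l. (1 - t) * \<xi>0 l + t * \<xi>1 l" and K=K and F=F] wpos[OF that]
    by (auto simp: S_def G_def Sol_def)
  have Scon: "connected (S t)" if "t \<in> I" for t
    using GI[OF that] cK unfolding S_def by (intro convex_connected vi_convex) auto
  have CSol: "C \<subseteq> Sol" by (simp add: C_def connected_component_subset)
  have bC: "bounded C" using bdC by (simp add: C_def Sol_def)
  obtain \<rho> where \<rho>: "\<rho> > 0" "C \<subseteq> ball 0 \<rho>" using bounded_subset_ballD[OF bC] by blast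
  define A where "A = {t\<in>I. S t \<noteq> {} \<and> S t \<subseteq> C}"
  have S0: "S 0 = vi K (Fw F \<xi>0)" by (simp add: S_def G_def)
  have S1: "S 1 = vi K (Fw F \<xi>1)" by (simp add: S_def G_def)
  have I01: "0 \<in> I" "1 \<in> I" by (auto simp: I_def)
  have x0C: "x0 \<in> C" using x0 by (simp add: C_def Sol_def)
  have "S 0 \<subseteq> C" unfolding C_def by (rule comp_absorb[OF Scon[OF I01(1)] SSol[OF I01(1)], of x0]) (use S0 \<xi>0 x0C in \<open>auto simp: C_def\<close>)
  then have A0: "0 \<in> A" using S0 \<xi>0 I01 by (auto simp: A_def)
  have usc_at: "\<exists>\<delta>>0. \<forall>t\<in>I. \<bar>t - s\<bar> < \<delta> \<longrightarrow> S t \<noteq> {} \<and> S t \<subseteq> U"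
    if "s \<in> I" "S s \<noteq> {}" "S s \<subseteq> ball 0 \<rho>" "open U" "S s \<subseteq> U" for s U
    using vi_usc[OF clK cK jc GI that(1), of \<rho> U] that by (auto simp: S_def)
  have opA: "openin (top_of_set I) A"
    unfolding openin_euclidean_subtopology_iff
  proof (intro conjI ballI)
    show "A \<subseteq> I" by (auto simp: A_def)
  next
    fix t0 assume t0A: "t0 \<in> A"
    then have t0: "t0 \<in> I" "S t0 \<noteq> {}" "S t0 \<subseteq> C" by (auto simp: A_def)
    obtain \<delta> where \<delta>: "\<delta> > 0" "\<forall>t\<in>I. \<bar>t - t0\<bar> < \<delta> \<longrightarrow> S t \<noteq> {} \<and> S t \<subseteq> ball 0 \<rho>"
      using usc_at[OF t0(1,2), of "ball 0 \<rho>"] t0(3) \<rho>(2) by auto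
    have "t \<in> A" if t: "t \<in> I" "dist t t0 < \<delta>" for t
    proof -
      define X where "X = {min t0 t .. max t0 t}"
      have XI: "X \<subseteq> I" using t t0(1) by (auto simp: X_def I_def)
      have Xd: "\<bar>s - t0\<bar> < \<delta>" if "s \<in> X" for s
        using that t(2) by (auto simp: X_def dist_real_def)
      have XS: "S s \<noteq> {} \<and> S s \<subseteq> ball 0 \<rho>" if "s \<in> X" for s
        using \<delta>(2) XI Xd that by blast
      have "connected (\<Union>s\<in>X. S s)"
      proof (rule usc_union_connected)
        show "connected X" by (simp add: X_def)
        show "S s \<noteq> {} \<and> connected (S s)" if "s \<in> X" for s
          using XS[OF that] Scon XI that by blast
        show "\<exists>\<delta>>0. \<forall>t'\<in>X. \<bar>t' - s\<bar> < \<delta> \<longrightarrow> S t' \<subseteq> U"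
          if "s \<in> X" "open U" "S s \<subseteq> U" for s U
          using usc_at[of s U] XS[OF that(1)] that XI by blast
      qed
      moreover have "(\<Union>s\<in>X. S s) \<subseteq> Sol" using SSol XI by blast
      moreover obtain z where "z \<in> S t0" using t0(2) by blast
      moreover have "t0 \<in> X" by (simp add: X_def)
      ultimately have "(\<Union>s\<in>X. S s) \<subseteq> C"
        using t0(3) unfolding C_def by (intro comp_absorb[of _ _ z]) auto
      moreover have "t \<in> X" by (simp add: X_def)
      ultimately show "t \<in> A" using XS t(1) by (auto simp: A_def)
    qed
    then show "\<exists>e>0. \<forall>x'\<in>I. dist x' t0 < e \<longrightarrow> x' \<in> A" using \<delta>(1) by blast
  qed
  have clA: "closedin (top_of_set I) A"
    unfolding closedin_limpt
  proof (intro conjI allI impI)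
    show "A \<subseteq> I" by (auto simp: A_def)
  next
    fix t assume "t islimpt A \<and> t \<in> I"
    then obtain f where f: "\<forall>n. f n \<in> A - {t}" "f \<longlonglongrightarrow> t" and tI: "t \<in> I"
      unfolding islimpt_sequential by blast
    have "\<forall>n. \<exists>z. z \<in> S (f n)" using f(1) by (auto simp: A_def)
    then obtain xs where xs: "\<And>n. xs n \<in> S (f n)" by metis
    have xsC: "xs n \<in> C" for n using xs[of n] f(1) by (auto simp: A_def)
    then have "bounded (range xs)" using bC by (meson bounded_subset image_subsetI)
    then obtain l r where lr: "strict_mono r" "(xs \<circ> r) \<longlonglongrightarrow> l"
      using bounded_imp_convergent_subsequence by blast
    have fI: "\<forall>n. f n \<in> I" using f(1) by (auto simp: A_def)
    have "l \<in> vi K (G t)"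
      by (rule vi_limit[OF jc subset_refl clK, of "f \<circ> r" t "xs \<circ> r"])
         (use fI tI xs lr LIMSEQ_subseq_LIMSEQ[OF f(2) lr(1)] in \<open>auto simp: S_def\<close>)
    then have lS: "l \<in> S t" by (simp add: S_def)
    then have lSol: "l \<in> Sol" using SSol tI by blast
    have "closedin (top_of_set Sol) C" unfolding C_def by (rule closedin_connected_component)
    then obtain T where T: "closed T" "C = Sol \<inter> T" unfolding closedin_closed by blast
    have "l \<in> T" using closed_sequentially[OF T(1), of "xs \<circ> r"] xsC T(2) lr(2) by auto
    then have "l \<in> C" using lSol T(2) by blast
    then have "S t \<subseteq> C" using comp_absorb[OF Scon[OF tI] SSol[OF tI] lS] by (simp add: C_def)
    then show "t \<in> A" using lS tI by (auto simp: A_def)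
  qed
  have "connected I" by (simp add: I_def)
  then have "A = {} \<or> A = I" using opA clA connected_clopen by blast
  then have "A = I" using A0 by blast
  then have "S 1 \<subseteq> C" using I01 by (auto simp: A_def)
  then show "x1 \<in> connected_component_set (pareto_sol F K) x0"
    using S1 \<xi>1 by (auto simp: C_def Sol_def)
qed

theorem theorem5:
  fixes F :: "'m::finite \<Rightarrow> 'a::euclidean_space \<Rightarrow> 'a"
    and K :: "'a set"
  assumes "K \<noteq> {}" and "closed K" and "convex K"
    and "polyhedron K"
    and "\<And>l. continuous_on K (F l)"
    and "\<And>l. monotone_map_on K (F l)"
  shows "(\<not> connected (pareto_sol F K) \<longrightarrow>
            (\<forall>x\<in>pareto_sol F K. \<not> bounded (connected_component_set (pareto_sol F K) x)))
       \<and> (bounded (pareto_sol F K) \<and> pareto_sol F K \<noteq> {} \<longrightarrow> connected (pareto_sol F K))"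
proof -
  have key: "pareto_sol F K = connected_component_set (pareto_sol F K) x"
    if "x \<in> pareto_sol F K" "bounded (connected_component_set (pareto_sol F K) x)" for x
    using main_comp[OF assms(2,3,4,5,6) that] connected_component_subset by blast
  show ?thesis
  proof (intro conjI impI ballI)
    fix x assume nc: "\<not> connected (pareto_sol F K)" and x: "x \<in> pareto_sol F K"
    show "\<not> bounded (connected_component_set (pareto_sol F K) x)"
    proof
      assume "bounded (connected_component_set (pareto_sol F K) x)"
      then have "pareto_sol F K = connected_component_set (pareto_sol F K) x" using key x by blast
      then show False using nc connected_connected_component by metis
    qed
  next
    assume h: "bounded (pareto_sol F K) \<and> pareto_sol F K \<noteq> {}"
    then obtain x where x: "x \<in> pareto_sol F K" by blast
    have "bounded (connected_component_set (pareto_sol F K) x)"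
      using h connected_component_subset bounded_subset by blast
    then have "pareto_sol F K = connected_component_set (pareto_sol F K) x" using key x by blast
    then show "connected (pareto_sol F K)" by (metis connected_connected_component)
  qed
qed

end
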